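(* Let $\mathcal{L},\tilde{\mathcal{L}}$ be distributions on $[0,\infty]$ satisfying: (H1) $\mathcal{L}$ is useful; (H2) $\mathcal{L}([0,\infty))>p_c$ and $\tilde{\mathcal{L}}([0,\infty))>p_c$; (H3) $\mathcal{L}\ne\tilde{\mathcal{L}}$; and let $(\tau,\tilde\tau)$ be a pair of random variables with marginals $\mathcal{L},\tilde{\mathcal{L}}$ and $\mathbb{E}[\tilde\tau\mid\tau]\le\tau$. Assume moreover that $\mathbb{P}(\mathbb{E}[\tilde\tau\mid\tau]=\tau)=1$ and $\{\tau<\infty\}=\{\tilde\tau<\infty\}$ almost surely. Then there exist a bounded Borel set $I\subset(0,\infty)$ and $\eta>0$ such that $\mathbb{P}(\tau\in I)>0$ and, if $(\tau_1,\tilde\tau_1),\dots,(\tau_4,\tilde\tau_4)$ are independent copies of $(\tau,\tilde\tau)$ and $\mathcal{F}=\sigma(\tau_1,\dots,\tau_4)$, then on the event $\{\tau_1,\dots,\tau_4\in I\}$, \[\mathbb{E}[\min(\tilde\tau_1+\tilde\tau_2,\tilde\tau_3+\tilde\tau_4)\mid\mathcal{F}]<\min(\tau_1+\tau_2,\tau_3+\tau_4)-\eta.\]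
   Context: $p_c$ / $\overrightarrow{p_c}$: critical probabilities of Bernoulli / oriented Bernoulli bond percolation on $\mathbb{Z}^d$, $d\ge2$. With $t_{\min}$ the minimum of the support of $\mathcal{L}$, $\mathcal{L}$ is useful if $\mathcal{L}(\{t_{\min}\})<p_c$ when $t_{\min}=0$ and $<\overrightarrow{p_c}$ when $t_{\min}>0$. *)

theory Defs
  imports "HOL-Probability.Probability"
begin

text \<open>Vertices of Z^d are integer lists of length d. The edge (x,i), i < d, joins x and
  x + e_i. A configuration assigns open (True) / closed (False) to each edge.\<close>

definition zd_edges :: "nat \<Rightarrow> (int list \<times> nat) set" where
  "zd_edges d = {(x, i). length x = d \<and> i < d}"

definition zd_shift :: "int list \<Rightarrow> nat \<Rightarrow> int list" where
  "zd_shift x i = x[i := x ! i + 1]"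

definition zd_origin :: "nat \<Rightarrow> int list" where
  "zd_origin d = replicate d 0"

definition bond_perc :: "nat \<Rightarrow> real \<Rightarrow> (int list \<times> nat \<Rightarrow> bool) measure" where
  "bond_perc d p = PiM (zd_edges d) (\<lambda>_. measure_pmf (bernoulli_pmf p))"

definition open_adj :: "(int list \<times> nat \<Rightarrow> bool) \<Rightarrow> int list \<Rightarrow> int list \<Rightarrow> bool" where
  "open_adj \<omega> x y \<longleftrightarrow> (\<exists>i < length x.
      (\<omega> (x, i) \<and> y = zd_shift x i) \<or> (\<omega> (y, i) \<and> x = zd_shift y i))"

definition open_adj_or :: "(int list \<times> nat \<Rightarrow> bool) \<Rightarrow> int list \<Rightarrow> int list \<Rightarrow> bool" where
  "open_adj_or \<omega> x y \<longleftrightarrow> (\<exists>i < length x. \<omega> (x, i) \<and> y = zd_shift x i)"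

definition perc_prob :: "nat \<Rightarrow> real \<Rightarrow> real" where
  "perc_prob d p = measure (bond_perc d p)
     {\<omega> \<in> space (bond_perc d p). infinite {y. (open_adj \<omega>)\<^sup>*\<^sup>* (zd_origin d) y}}"

definition perc_prob_or :: "nat \<Rightarrow> real \<Rightarrow> real" where
  "perc_prob_or d p = measure (bond_perc d p)
     {\<omega> \<in> space (bond_perc d p). infinite {y. (open_adj_or \<omega>)\<^sup>*\<^sup>* (zd_origin d) y}}"

definition p_c :: "nat \<Rightarrow> real" where
  "p_c d = Sup {p \<in> {0..1}. perc_prob d p = 0}"

definition p_c_or :: "nat \<Rightarrow> real" where
  "p_c_or d = Sup {p \<in> {0..1}. perc_prob_or d p = 0}"

definition measure_support :: "'a::topological_space measure \<Rightarrow> 'a set" where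
  "measure_support N = {x. \<forall>U. open U \<and> x \<in> U \<longrightarrow> emeasure N U > 0}"

definition t_min :: "ennreal measure \<Rightarrow> ennreal" where
  "t_min L = Inf (measure_support L)"

definition useful :: "nat \<Rightarrow> ennreal measure \<Rightarrow> bool" where
  "useful d L \<longleftrightarrow>
     (t_min L = 0 \<longrightarrow> measure L {0} < p_c d) \<and>
     (t_min L > 0 \<longrightarrow> measure L {t_min L} < p_c_or d)"

end

theory Submission imports Defs begin

lemma sfs_vimage:
  assumes "prob_space M" "f \<in> measurable M N"
  shows "sigma_finite_subalgebra M (vimage_algebra (space M) f N)"
proof -
  have "finite_measure_subalgebra M (vimage_algebra (space M) f N)"
    unfolding finite_measure_subalgebra_def finite_measure_subalgebra_axioms_def subalgebra_def
    using assms sets_image_in_sets[OF refl assms(2)]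
    by (auto simp: prob_space.finite_measure)
  then show ?thesis by (rule finite_measure_subalgebra_is_sigma_finite)
qed

lemma coord_ge:
  fixes J :: "('b::topological_space \<times> 'c::{topological_space,zero}) measure"
    and P Q :: "'b \<times> 'c \<Rightarrow> ennreal" and \<Phi> :: "(nat \<Rightarrow> 'b \<times> 'c) \<Rightarrow> ennreal"
  assumes J: "prob_space J" "sets J = sets (borel \<Otimes>\<^sub>M borel)"
    and K: "k \<in> K" "finite K"
    and PQ: "P \<in> borel_measurable J" "Q \<in> borel_measurable J"
    and key: "\<And>\<phi>. \<phi> \<in> borel_measurable borel \<Longrightarrow> (\<And>t. t \<notin> I \<Longrightarrow> \<phi> t = 0) \<Longrightarrow>
        (\<integral>\<^sup>+ y. \<phi> (fst y) * Q y \<partial>J) \<le> (\<integral>\<^sup>+ y. \<phi> (fst y) * P y \<partial>J)"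
    and \<Phi>: "\<Phi> \<in> borel_measurable (PiM K (\<lambda>_. J))"
    and indep: "\<And>x y z. x \<in> space (PiM K (\<lambda>_. J)) \<Longrightarrow> fst y = fst z \<Longrightarrow> \<Phi> (x(k := y)) = \<Phi> (x(k := z))"
    and supp: "\<And>x. x \<in> space (PiM K (\<lambda>_. J)) \<Longrightarrow> fst (x k) \<notin> I \<Longrightarrow> \<Phi> x = 0"
  shows "(\<integral>\<^sup>+\<omega>. \<Phi> \<omega> * Q (\<omega> k) \<partial>PiM K (\<lambda>_. J)) \<le> (\<integral>\<^sup>+\<omega>. \<Phi> \<omega> * P (\<omega> k) \<partial>PiM K (\<lambda>_. J))"
proof -
  interpret product_sigma_finite "\<lambda>_. J"
    unfolding product_sigma_finite_def using J(1) prob_space_imp_sigma_finite by blast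
  have spJ: "space J = UNIV" using sets_eq_imp_space_eq[OF J(2)] by (simp add: space_pair_measure)
  have KK: "insert k (K - {k}) = K" using K by auto
  have m1: "(\<lambda>\<omega>. \<Phi> \<omega> * Q (\<omega> k)) \<in> borel_measurable (PiM (insert k (K - {k})) (\<lambda>_. J))"
    unfolding KK using \<Phi> PQ K by measurable
  have m2: "(\<lambda>\<omega>. \<Phi> \<omega> * P (\<omega> k)) \<in> borel_measurable (PiM (insert k (K - {k})) (\<lambda>_. J))"
    unfolding KK using \<Phi> PQ K by measurable
  have "(\<integral>\<^sup>+\<omega>. \<Phi> \<omega> * Q (\<omega> k) \<partial>PiM K (\<lambda>_. J)) =
     (\<integral>\<^sup>+ x. (\<integral>\<^sup>+ y. \<Phi> (x(k := y)) * Q y \<partial>J) \<partial>(PiM (K - {k}) (\<lambda>_. J)))"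
    using product_nn_integral_insert[OF _ _ m1] K KK by simp
  also have "\<dots> \<le> (\<integral>\<^sup>+ x. (\<integral>\<^sup>+ y. \<Phi> (x(k := y)) * P y \<partial>J) \<partial>(PiM (K - {k}) (\<lambda>_. J)))"
  proof (rule nn_integral_mono)
    fix x assume x: "x \<in> space (PiM (K - {k}) (\<lambda>_. J))"
    define \<phi> where "\<phi> t = \<Phi> (x(k := (t, 0)))" for t
    have upd: "(\<lambda>v. x(k := v)) \<in> measurable J (PiM K (\<lambda>_. J))"
      using measurable_component_update[OF x, of k] KK by simp
    have xs: "x(k := v) \<in> space (PiM K (\<lambda>_. J))" for v
      using measurable_space[OF upd, of v] spJ by simp
    have pm: "(\<lambda>t. (t, 0::'c)) \<in> measurable borel J"
      using J(2) by (simp add: measurable_cong_sets[OF refl J(2)])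
    have "\<phi> \<in> borel_measurable borel"
      unfolding \<phi>_def using measurable_comp[OF measurable_comp[OF pm upd] \<Phi>] by (simp add: o_def)
    moreover have "\<phi> t = 0" if "t \<notin> I" for t
      unfolding \<phi>_def using supp[OF xs, of "(t,0)"] that by simp
    ultimately have "(\<integral>\<^sup>+ y. \<phi> (fst y) * Q y \<partial>J) \<le> (\<integral>\<^sup>+ y. \<phi> (fst y) * P y \<partial>J)"
      by (rule key)
    moreover have "\<Phi> (x(k := y)) = \<phi> (fst y)" for y
      unfolding \<phi>_def using indep[OF xs, of y "(fst y, 0)"] by simp
    ultimately show "(\<integral>\<^sup>+ y. \<Phi> (x(k := y)) * Q y \<partial>J) \<le> (\<integral>\<^sup>+ y. \<Phi> (x(k := y)) * P y \<partial>J)"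
      by simp
  qed
  also have "\<dots> = (\<integral>\<^sup>+\<omega>. \<Phi> \<omega> * P (\<omega> k) \<partial>PiM K (\<lambda>_. J))"
    using product_nn_integral_insert[OF _ _ m2] K KK by simp
  finally show ?thesis .
qed

lemma real_ineq:
  fixes a0 a1 a2 a3 b0 b1 b2 b3 w K :: real
  assumes "K*w < a0" "a0 \<le> (K+1)*w" "K*w < a1" "a1 \<le> (K+1)*w"
    "K*w < a2" "a2 \<le> (K+1)*w" "K*w < a3" "a3 \<le> (K+1)*w"
  shows "b0 + a1 - a2 - a3 < 0 \<Longrightarrow>
      2 * min (b0+b1) (b2+b3) + \<bar>b0 - a0\<bar> + a0 + 2*a1 \<le> 2 * min (a0+a1) (a2+a3) + 4*w + b0 + 2*b1"
    and "\<not> b0 + a1 - a2 - a3 < 0 \<Longrightarrow>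
      2 * min (b0+b1) (b2+b3) + \<bar>b0 - a0\<bar> + a0 + 2*a2 + 2*a3 \<le> 2 * min (a0+a1) (a2+a3) + 4*w + b0 + 2*b2 + 2*b3"
  using assms by (auto simp: abs_if min_def algebra_simps)

lemma ennreal_pos_ex: "(0::ennreal) < a \<Longrightarrow> \<exists>n. ennreal (1 / real (Suc n)) \<le> a"
proof (cases a rule: ennreal_cases)
  case (real r)
  assume "0 < a"
  then have "0 < r" using real by simp
  then obtain n where "inverse (real (Suc n)) < r" using reals_Archimedean by blast
  then show ?thesis using real by (intro exI[of _ n]) (auto simp: inverse_eq_divide ennreal_leI)
qed simp

lemma interval_ex:
  fixes r w :: real assumes "0 < r" "0 < w"
  shows "\<exists>k::nat. ennreal r \<in> {ennreal (real k * w)<..ennreal ((real k + 1) * w)}"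
proof -
  define m where "m = \<lceil>r / w\<rceil>"
  have m1: "m \<ge> 1" unfolding m_def using assms by (simp add: zero_less_divide_iff)
  have a: "real_of_int m - 1 < r / w" "r / w \<le> real_of_int m" unfolding m_def by linarith+
  define k where "k = nat (m - 1)"
  have kr: "real k = real_of_int m - 1" unfolding k_def using m1 by simp
  have "(real_of_int m - 1) * w < r" using a(1) assms by (simp add: field_simps)
  then have "real k * w < r" using kr by simp
  moreover have "r \<le> real_of_int m * w" using a(2) assms by (simp add: field_simps)
  then have "r \<le> (real k + 1) * w" using kr by simp
  ultimately show ?thesis using assms
    by (intro exI[of _ k]) (auto simp: ennreal_less_iff ennreal_leI)
qed
lemma pointwise_enn:
  fixes a0 a1 a2 a3 b0 b1 b2 b3 w K :: real
  assumes "K*w < a0" "a0 \<le> (K+1)*w" "K*w < a1" "a1 \<le> (K+1)*w"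
    "K*w < a2" "a2 \<le> (K+1)*w" "K*w < a3" "a3 \<le> (K+1)*w"
    and "0 \<le> K" "0 < w" "0 \<le> b0" "0 \<le> b1" "0 \<le> b2" "0 \<le> b3"
  defines "cn \<equiv> (if b0 + a1 - a2 - a3 < 0 then 1 else 0 :: ennreal)"
    and "cp \<equiv> (if b0 + a1 - a2 - a3 < 0 then 0 else 1 :: ennreal)"
  shows "2 * min (ennreal b0 + ennreal b1) (ennreal b2 + ennreal b3) + ennreal \<bar>b0 - a0\<bar> + ennreal a0
      + 2 * cn * ennreal a1 + 2 * cp * ennreal a2 + 2 * cp * ennreal a3
    \<le> 2 * min (ennreal a0 + ennreal a1) (ennreal a2 + ennreal a3) + ennreal (4 * w) + ennreal b0
      + 2 * cn * ennreal b1 + 2 * cp * ennreal b2 + 2 * cp * ennreal b3"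
proof -
  have nn: "0 \<le> a0" "0 \<le> a1" "0 \<le> a2" "0 \<le> a3"
    using assms(1,3,5,7) \<open>0 \<le> K\<close> \<open>0 < w\<close> by (smt (verit) mult_nonneg_nonneg)+
  have e: "min (ennreal x + ennreal y) (ennreal z + ennreal v) = ennreal (min (x+y) (z+v))"
    if "0 \<le> x" "0 \<le> y" "0 \<le> z" "0 \<le> v" for x y z v :: real
    using that by (simp add: ennreal_plus[symmetric] min_ennreal del: ennreal_plus)
  have two: "2 * ennreal x = ennreal (2 * x)" if "0 \<le> x" for x :: real
    using that by (simp add: ennreal_mult)
  show ?thesis
  proof (cases "b0 + a1 - a2 - a3 < 0")
    case True
    have "2 * min (b0+b1) (b2+b3) + \<bar>b0 - a0\<bar> + a0 + 2*a1 \<le> 2 * min (a0+a1) (a2+a3) + 4*w + b0 + 2*b1"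
      by (rule real_ineq(1)[OF assms(1-8) True])
    then have "ennreal (2 * min (b0+b1) (b2+b3) + \<bar>b0 - a0\<bar> + a0 + 2*a1) \<le> ennreal (2 * min (a0+a1) (a2+a3) + 4*w + b0 + 2*b1)"
      by (rule ennreal_leI)
    then show ?thesis using True nn assms(10-14)
      by (simp add: cn_def cp_def e two min_ennreal ennreal_plus[symmetric] del: ennreal_plus)
  next
    case False
    have "2 * min (b0+b1) (b2+b3) + \<bar>b0 - a0\<bar> + a0 + 2*a2 + 2*a3 \<le> 2 * min (a0+a1) (a2+a3) + 4*w + b0 + 2*b2 + 2*b3"
      by (rule real_ineq(2)[OF assms(1-8) False])
    then have "ennreal (2 * min (b0+b1) (b2+b3) + \<bar>b0 - a0\<bar> + a0 + 2*a2 + 2*a3) \<le> ennreal (2 * min (a0+a1) (a2+a3) + 4*w + b0 + 2*b2 + 2*b3)"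
      by (rule ennreal_leI)
    then show ?thesis using False nn assms(10-14)
      by (simp add: cn_def cp_def e two min_ennreal ennreal_plus[symmetric] del: ennreal_plus)
  qed
qed
lemma fin_ennreal: "(x::ennreal) < \<infinity> \<Longrightarrow> \<exists>r. 0 \<le> r \<and> x = ennreal r"
  by (metis ennreal_enn2real enn2real_nonneg infinity_ennreal_def)

lemma two_enn: "0 \<le> y \<Longrightarrow> 2 * ennreal y = ennreal (2 * y)"
  by (simp add: ennreal_mult)

lemma final_alg:
  fixes A Xg T Hh \<mu> :: ennreal and c0 w b :: real
  assumes main: "2*A + Xg + T \<le> 2*Hh + ennreal (4*w) * \<mu> + T"
    and X: "ennreal c0 * \<mu> \<le> Xg" and Hh: "Hh \<le> A + ennreal w * \<mu>"
    and Hb: "Hh \<le> ennreal (2*b) * \<mu>" and T: "T < \<infinity>" and mu: "\<mu> < \<infinity>"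
    and c0: "c0 = 8*w" and w: "w > 0"
  shows "\<mu> = 0"
proof -
  have m1: "2*A + Xg \<le> 2*Hh + ennreal (4*w) * \<mu>"
    using main T by (metis add.commute ennreal_add_left_cancel_le infinity_ennreal_def top.not_eq_extremum)
  have Hf: "Hh < \<infinity>" using Hb mu
    by (metis ennreal_mult_less_top infinity_ennreal_def ennreal_less_top le_less_trans)
  have rf: "2*Hh + ennreal (4*w) * \<mu> < \<infinity>" using Hf mu
    by (simp add: ennreal_mult_less_top infinity_ennreal_def)
  have l: "2*A + Xg < \<infinity>" using m1 rf by (rule le_less_trans)
  have "2*A \<le> 2*A + Xg" by simp
  then have "2*A < \<infinity>" using l by (rule le_less_trans)
  then have Af: "A < \<infinity>" by (auto simp: ennreal_mult_less_top infinity_ennreal_def)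
  have "Xg \<le> 2*A + Xg" by simp
  then have Xf: "Xg < \<infinity>" using l by (rule le_less_trans)
  obtain a where a: "0 \<le> a" "A = ennreal a" using fin_ennreal[OF Af] by blast
  obtain x where x: "0 \<le> x" "Xg = ennreal x" using fin_ennreal[OF Xf] by blast
  obtain hh where hh: "0 \<le> hh" "Hh = ennreal hh" using fin_ennreal[OF Hf] by blast
  obtain m where m: "0 \<le> m" "\<mu> = ennreal m" using fin_ennreal[OF mu] by blast
  have c0p: "0 \<le> c0" using c0 w by simp
  have r1: "2*a + x \<le> 2*hh + 4*w*m"
    using m1 a x hh m w by (simp add: two_enn ennreal_mult[symmetric] ennreal_plus[symmetric] del: ennreal_plus)
  have r2: "c0 * m \<le> x" using X x m c0p by (simp add: ennreal_mult[symmetric])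
  have r3: "hh \<le> a + w * m" using Hh a hh m w
    by (simp add: two_enn ennreal_mult[symmetric] ennreal_plus[symmetric] del: ennreal_plus)
  have "w * m \<le> 0" using r1 r2 r3 c0 by (simp add: algebra_simps)
  then have "m = 0" using w m(1) by (simp add: mult_le_0_iff)
  then show ?thesis using m by simp
qed
lemma nn6:
  assumes [measurable]: "f1 \<in> borel_measurable M" "f2 \<in> borel_measurable M" "f3 \<in> borel_measurable M"
    "f4 \<in> borel_measurable M" "f5 \<in> borel_measurable M" "f6 \<in> borel_measurable M"
  shows "(\<integral>\<^sup>+ x. f1 x + f2 x + f3 x + f4 x + f5 x + f6 x \<partial>M) =
    (\<integral>\<^sup>+ x. f1 x \<partial>M) + (\<integral>\<^sup>+ x. f2 x \<partial>M) + (\<integral>\<^sup>+ x. f3 x \<partial>M) + (\<integral>\<^sup>+ x. f4 x \<partial>M)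
     + (\<integral>\<^sup>+ x. f5 x \<partial>M) + (\<integral>\<^sup>+ x. f6 x \<partial>M)"
  by (simp add: nn_integral_add)


theorem lemma3p3:
  fixes M :: "'a measure" and \<tau> \<tau>' :: "'a \<Rightarrow> ennreal" and d :: nat
  assumes "d \<ge> 2"
    and "prob_space M"
    and "\<tau> \<in> borel_measurable M" and "\<tau>' \<in> borel_measurable M"
    and H1: "useful d (distr M borel \<tau>)"
    and H2: "measure M {x \<in> space M. \<tau> x < \<infinity>} > p_c d"
            "measure M {x \<in> space M. \<tau>' x < \<infinity>} > p_c d"
    and H3: "distr M borel \<tau> \<noteq> distr M borel \<tau>'"
    and "AE x in M. nn_cond_exp M (vimage_algebra (space M) \<tau> borel) \<tau>' x \<le> \<tau> x"
    and "AE x in M. nn_cond_exp M (vimage_algebra (space M) \<tau> borel) \<tau>' x = \<tau> x"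
    and "AE x in M. (\<tau> x < \<infinity>) = (\<tau>' x < \<infinity>)"
  shows "\<exists>(I :: ennreal set) (\<eta> :: real) (b :: real).
     I \<in> sets borel \<and> I \<subseteq> {0<..ennreal b} \<and> \<eta> > 0 \<and>
     measure M {x \<in> space M. \<tau> x \<in> I} > 0 \<and>
     (let J = distr M (borel \<Otimes>\<^sub>M borel) (\<lambda>x. (\<tau> x, \<tau>' x));
          N = PiM {..<4::nat} (\<lambda>_. J);
          F = vimage_algebra (space N) (\<lambda>\<omega>. \<lambda>i\<in>{..<4::nat}. fst (\<omega> i))
                (PiM {..<4::nat} (\<lambda>_. borel))
      in AE \<omega> in N. (\<forall>i<4. fst (\<omega> i) \<in> I) \<longrightarrow>
           nn_cond_exp N F (\<lambda>\<omega>. min (snd (\<omega> 0) + snd (\<omega> 1)) (snd (\<omega> 2) + snd (\<omega> 3))) \<omega>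
             + ennreal \<eta>
           < min (fst (\<omega> 0) + fst (\<omega> 1)) (fst (\<omega> 2) + fst (\<omega> 3)))"
proof -
  interpret M: prob_space M by fact
  note [measurable] = assms(3,4)
  define F0 where "F0 = vimage_algebra (space M) \<tau> borel"
  have sfs0: "sigma_finite_subalgebra M F0"
    unfolding F0_def by (rule sfs_vimage) (simp_all add: assms)
  have tF0[measurable]: "\<tau> \<in> borel_measurable F0"
    unfolding F0_def by (rule measurable_vimage_algebra1) simp
  have ce: "AE x in M. nn_cond_exp M F0 \<tau>' x = \<tau> x" using assms(10) unfolding F0_def .
  have C1: "(\<integral>\<^sup>+ x. \<phi> (\<tau> x) * \<tau>' x \<partial>M) = (\<integral>\<^sup>+ x. \<phi> (\<tau> x) * \<tau> x \<partial>M)"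
    if [measurable]: "\<phi> \<in> borel_measurable borel" for \<phi>
  proof -
    have "(\<integral>\<^sup>+ x. \<phi> (\<tau> x) * \<tau>' x \<partial>M) = (\<integral>\<^sup>+ x. \<phi> (\<tau> x) * nn_cond_exp M F0 \<tau>' x \<partial>M)"
      by (rule sigma_finite_subalgebra.nn_cond_exp_intg[OF sfs0, symmetric]) simp_all
    also have "\<dots> = (\<integral>\<^sup>+ x. \<phi> (\<tau> x) * \<tau> x \<partial>M)"
      by (rule nn_integral_cong_AE) (use ce in auto)
    finally show ?thesis .
  qed
  define G where "G x = ennreal \<bar>enn2real (\<tau>' x) - enn2real (\<tau> x)\<bar>" for x
  have [measurable]: "G \<in> borel_measurable M" unfolding G_def by measurable
  define D where "D = nn_cond_exp M F0 G"
  have DF0[measurable]: "D \<in> borel_measurable F0" unfolding D_def by simp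
  have DM[measurable]: "D \<in> borel_measurable M" unfolding D_def by simp
  define P0 where "P0 = {t::ennreal. 0 < t \<and> t < \<infinity>}"
  have P0b[measurable]: "P0 \<in> sets borel" unfolding P0_def by measurable
  have notAE: "\<not> (AE x in M. \<tau> x \<in> P0 \<longrightarrow> G x = 0)"
  proof
    assume A: "AE x in M. \<tau> x \<in> P0 \<longrightarrow> G x = 0"
    have "(\<integral>\<^sup>+ x. indicator {0} (\<tau> x) * \<tau>' x \<partial>M) = (\<integral>\<^sup>+ x. indicator {0} (\<tau> x) * \<tau> x \<partial>M)"
      by (rule C1) simp
    also have "\<dots> = 0" by (rule nn_integral_zero') (auto simp: indicator_def)
    finally have "AE x in M. indicator {0} (\<tau> x) * \<tau>' x = 0"
      by (subst (asm) nn_integral_0_iff_AE) simp_all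
    then have A0: "AE x in M. \<tau> x = 0 \<longrightarrow> \<tau>' x = 0"
      by eventually_elim (auto simp: indicator_def)
    have "AE x in M. \<tau>' x = \<tau> x" using A A0 assms(11)
    proof eventually_elim
      case (elim x)
      consider "\<tau> x = 0" | "\<tau> x = \<infinity>" | "\<tau> x \<in> P0"
        unfolding P0_def by (metis infinity_ennreal_def mem_Collect_eq top.not_eq_extremum zero_less_iff_neq_zero)
      then show ?case
      proof cases
        case 1 then show ?thesis using elim(2) by simp
      next
        case 2
        have "\<not> \<tau>' x < \<infinity>" using elim(3) 2 by simp
        then show ?thesis using 2 by (metis infinity_ennreal_def top.not_eq_extremum)
      next
        case 3
        have f: "\<tau> x < \<infinity>" using 3 unfolding P0_def by simp
        then have f': "\<tau>' x < \<infinity>" using elim(3) by simp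
        have "G x = 0" using elim(1) 3 by simp
        then have "enn2real (\<tau>' x) = enn2real (\<tau> x)" unfolding G_def by simp
        then show ?thesis using f f' by (metis ennreal_enn2real infinity_ennreal_def)
      qed
    qed
    then have "AE x in M. \<tau> x = \<tau>' x" by eventually_elim simp
    then have "distr M borel \<tau> = distr M borel \<tau>'"
      by (intro distr_cong_AE) auto
    with H3 show False by simp
  qed
  have int_pos: "(\<integral>\<^sup>+ x. indicator P0 (\<tau> x) * G x \<partial>M) \<noteq> 0"
  proof
    assume "(\<integral>\<^sup>+ x. indicator P0 (\<tau> x) * G x \<partial>M) = 0"
    then have "AE x in M. indicator P0 (\<tau> x) * G x = 0"
      by (subst (asm) nn_integral_0_iff_AE) simp_all
    then have "AE x in M. \<tau> x \<in> P0 \<longrightarrow> G x = 0"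
      by eventually_elim (auto simp: indicator_def)
    with notAE show False by simp
  qed
  have "(\<integral>\<^sup>+ x. indicator P0 (\<tau> x) * D x \<partial>M) = (\<integral>\<^sup>+ x. indicator P0 (\<tau> x) * G x \<partial>M)"
    unfolding D_def by (rule sigma_finite_subalgebra.nn_cond_exp_intg[OF sfs0]) simp_all
  with int_pos have notAE2: "\<not> (AE x in M. indicator P0 (\<tau> x) * D x = 0)"
    by (subst nn_integral_0_iff_AE[symmetric]) simp_all
  obtain n where n: "{x \<in> space M. \<tau> x \<in> P0 \<and> D x \<ge> ennreal (1 / real (Suc n))} \<notin> null_sets M"
  proof (rule ccontr)
    assume H: "\<And>n. {x \<in> space M. \<tau> x \<in> P0 \<and> D x \<ge> ennreal (1 / real (Suc n))} \<notin> null_sets M \<Longrightarrow> thesis"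
      and nt: "\<not> thesis"
    have nul: "\<And>n. {x \<in> space M. \<tau> x \<in> P0 \<and> D x \<ge> ennreal (1 / real (Suc n))} \<in> null_sets M"
      using H nt by blast
    have "AE x in M. indicator P0 (\<tau> x) * D x = 0"
    proof (rule AE_I')
      show "(\<Union>n. {x \<in> space M. \<tau> x \<in> P0 \<and> D x \<ge> ennreal (1 / real (Suc n))}) \<in> null_sets M"
        using nul by (intro null_sets_UN) 
      show "{x \<in> space M. \<not> indicator P0 (\<tau> x) * D x = 0} \<subseteq>
          (\<Union>n. {x \<in> space M. \<tau> x \<in> P0 \<and> D x \<ge> ennreal (1 / real (Suc n))})"
      proof
        fix x assume x: "x \<in> {x \<in> space M. \<not> indicator P0 (\<tau> x) * D x = 0}"
        then have "\<tau> x \<in> P0" "D x \<noteq> 0" by (auto simp: indicator_def split: if_splits)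
        then obtain m where "ennreal (1 / real (Suc m)) \<le> D x"
          using ennreal_pos_ex[of "D x"] by (auto simp: zero_less_iff_neq_zero)
        then show "x \<in> (\<Union>n. {x \<in> space M. \<tau> x \<in> P0 \<and> D x \<ge> ennreal (1 / real (Suc n))})"
          using x \<open>\<tau> x \<in> P0\<close> by auto
      qed
    qed
    with notAE2 show False by simp
  qed
  define c0 :: real where "c0 = 1 / real (Suc n)"
  have c0pos: "c0 > 0" unfolding c0_def by simp
  have spF0: "space F0 = space M" unfolding F0_def by simp
  have "{x \<in> space F0. D x \<ge> ennreal c0} \<in> sets F0" by measurable
  then have "{x \<in> space M. D x \<ge> ennreal c0} \<in> sets F0" by (simp only: spF0)
  then obtain B0 where B0[measurable]: "B0 \<in> sets borel"
    and B0eq: "{x \<in> space M. D x \<ge> ennreal c0} = \<tau> -` B0 \<inter> space M"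
    unfolding F0_def by (subst (asm) sets_vimage_algebra2) auto
  have DB0: "D x \<ge> ennreal c0" if "x \<in> space M" "\<tau> x \<in> B0" for x
    using B0eq that by blast
  define w where "w = c0 / 8"
  have wpos: "w > 0" unfolding w_def using c0pos by simp
  define Iv where "Iv k = {ennreal (real k * w)<..ennreal ((real k + 1) * w)}" for k :: nat
  obtain k where k: "{x \<in> space M. \<tau> x \<in> B0 \<inter> Iv k} \<notin> null_sets M"
  proof (rule ccontr)
    assume H: "\<And>k. {x \<in> space M. \<tau> x \<in> B0 \<inter> Iv k} \<notin> null_sets M \<Longrightarrow> thesis"
      and nt: "\<not> thesis"
    have nul: "\<And>k. {x \<in> space M. \<tau> x \<in> B0 \<inter> Iv k} \<in> null_sets M"
      using H nt by blast
    have "{x \<in> space M. \<tau> x \<in> P0 \<and> D x \<ge> ennreal (1 / real (Suc n))} \<in> null_sets M"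
    proof (rule null_sets_subset)
      show "(\<Union>k. {x \<in> space M. \<tau> x \<in> B0 \<inter> Iv k}) \<in> null_sets M"
        using nul by (intro null_sets_UN)
      show "{x \<in> space M. \<tau> x \<in> P0 \<and> D x \<ge> ennreal (1 / real (Suc n))} \<in> sets M" by measurable
      show "{x \<in> space M. \<tau> x \<in> P0 \<and> D x \<ge> ennreal (1 / real (Suc n))} \<subseteq> (\<Union>k. {x \<in> space M. \<tau> x \<in> B0 \<inter> Iv k})"
      proof
        fix x assume x: "x \<in> {x \<in> space M. \<tau> x \<in> P0 \<and> D x \<ge> ennreal (1 / real (Suc n))}"
        then have "\<tau> x \<in> B0" using B0eq unfolding c0_def by blast
        from x have "0 < \<tau> x" "\<tau> x < \<infinity>" unfolding P0_def by auto
        then obtain r where r: "\<tau> x = ennreal r" "0 < r"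
          by (metis ennreal_enn2real enn2real_positive_iff infinity_ennreal_def)
        obtain j where "ennreal r \<in> Iv j" using interval_ex[OF r(2) wpos] unfolding Iv_def by blast
        then show "x \<in> (\<Union>k. {x \<in> space M. \<tau> x \<in> B0 \<inter> Iv k})"
          using x r \<open>\<tau> x \<in> B0\<close> by auto
      qed
    qed
    with n show False by simp
  qed
  define I where "I = B0 \<inter> Iv k"
  define b where "b = (real k + 1) * w"
  have Ib[measurable]: "I \<in> sets borel" unfolding I_def Iv_def by measurable
  have Ival: "\<exists>a. t = ennreal a \<and> real k * w < a \<and> a \<le> (real k + 1) * w" if "t \<in> I" for t
  proof -
    have t: "ennreal (real k * w) < t" "t \<le> ennreal ((real k + 1) * w)"
      using that unfolding I_def Iv_def by auto
    then have "t < \<infinity>" using le_less_trans by fastforce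
    then obtain a where a: "t = ennreal a" "0 \<le> a"
      by (metis ennreal_enn2real enn2real_nonneg infinity_ennreal_def)
    have "real k * w < a" using t(1) a wpos
      by (metis ennreal_less_iff mult_nonneg_nonneg of_nat_0_le_iff order_less_le)
    moreover have "a \<le> (real k + 1) * w" using t(2) a wpos
      by (simp add: ennreal_le_iff)
    ultimately show ?thesis using a by blast
  qed
  have Isub: "I \<subseteq> {0<..ennreal b}"
  proof
    fix t assume "t \<in> I"
    then obtain a where "t = ennreal a" "real k * w < a" "a \<le> b" using Ival unfolding b_def by blast
    moreover have "0 \<le> real k * w" using wpos by simp
    ultimately show "t \<in> {0<..ennreal b}" by (auto simp: ennreal_leI)
  qed
  have Ipos: "measure M {x \<in> space M. \<tau> x \<in> I} > 0"
  proof -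
    have s: "{x \<in> space M. \<tau> x \<in> I} \<in> sets M" by measurable
    have "emeasure M {x \<in> space M. \<tau> x \<in> I} \<noteq> 0" using k s unfolding I_def by auto
    then have "measure M {x \<in> space M. \<tau> x \<in> I} \<noteq> 0"
      by (simp add: M.emeasure_eq_measure)
    then show ?thesis using measure_nonneg[of M] by (simp add: order_less_le)
  qed
  define J where "J = distr M (borel \<Otimes>\<^sub>M borel) (\<lambda>x. (\<tau> x, \<tau>' x))"
  have Jprob: "prob_space J" unfolding J_def by (rule M.prob_space_distr) measurable
  have setsJ: "sets J = sets (borel \<Otimes>\<^sub>M borel)" unfolding J_def by simp
  have spJ: "space J = UNIV" unfolding J_def by (simp add: space_pair_measure)
  have fstJ[measurable]: "fst \<in> borel_measurable J"
    unfolding measurable_cong_sets[OF setsJ refl] by measurable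
  have sndJ[measurable]: "snd \<in> borel_measurable J"
    unfolding measurable_cong_sets[OF setsJ refl] by measurable
  have keyJ1: "(\<integral>\<^sup>+ y. \<phi> (fst y) * snd y \<partial>J) = (\<integral>\<^sup>+ y. \<phi> (fst y) * fst y \<partial>J)"
    if [measurable]: "\<phi> \<in> borel_measurable borel" for \<phi>
    unfolding J_def by (subst (1 2) nn_integral_distr) (simp_all add: C1)
  define G' where "G' y = ennreal \<bar>enn2real (snd y) - enn2real (fst y)\<bar>" for y :: "ennreal \<times> ennreal"
  have G'J[measurable]: "G' \<in> borel_measurable J" unfolding G'_def by measurable
  have keyJ2: "(\<integral>\<^sup>+ y. \<phi> (fst y) * ennreal c0 \<partial>J) \<le> (\<integral>\<^sup>+ y. \<phi> (fst y) * G' y \<partial>J)"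
    if [measurable]: "\<phi> \<in> borel_measurable borel" and supp: "\<And>t. t \<notin> I \<Longrightarrow> \<phi> t = 0" for \<phi>
  proof -
    have "(\<integral>\<^sup>+ y. \<phi> (fst y) * ennreal c0 \<partial>J) = (\<integral>\<^sup>+ x. \<phi> (\<tau> x) * ennreal c0 \<partial>M)"
      unfolding J_def by (subst nn_integral_distr) simp_all
    also have "\<dots> \<le> (\<integral>\<^sup>+ x. \<phi> (\<tau> x) * D x \<partial>M)"
    proof (rule nn_integral_mono)
      fix x assume x: "x \<in> space M"
      show "\<phi> (\<tau> x) * ennreal c0 \<le> \<phi> (\<tau> x) * D x"
      proof (cases "\<tau> x \<in> I")
        case True
        then have "\<tau> x \<in> B0" unfolding I_def by simp
        then show ?thesis using DB0[OF x] by (simp add: mult_left_mono)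
      qed (simp add: supp)
    qed
    also have "\<dots> = (\<integral>\<^sup>+ x. \<phi> (\<tau> x) * G x \<partial>M)"
      unfolding D_def by (rule sigma_finite_subalgebra.nn_cond_exp_intg[OF sfs0]) simp_all
    also have "\<dots> = (\<integral>\<^sup>+ y. \<phi> (fst y) * G' y \<partial>J)"
      unfolding J_def by (subst nn_integral_distr) (simp_all add: G_def G'_def)
    finally show ?thesis .
  qed
  have AEJ: "AE y in J. fst y \<in> I \<longrightarrow> snd y < \<infinity>"
    unfolding J_def
  proof (subst AE_distr_iff)
    show "AE x in M. fst (\<tau> x, \<tau>' x) \<in> I \<longrightarrow> snd (\<tau> x, \<tau>' x) < \<infinity>"
      using assms(11)
    proof eventually_elim
      case (elim x)
      show ?case
      proof
        assume "fst (\<tau> x, \<tau>' x) \<in> I"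
        then obtain a where "\<tau> x = ennreal a" using Ival by auto
        then show "snd (\<tau> x, \<tau>' x) < \<infinity>" using elim by simp
      qed
    qed
  qed measurable
  define N where "N = PiM {..<4::nat} (\<lambda>_. J)"
  define \<pi> where "\<pi> \<omega> = (\<lambda>i\<in>{..<4::nat}. fst (\<omega> i))" for \<omega> :: "nat \<Rightarrow> ennreal \<times> ennreal"
  define F where "F = vimage_algebra (space N) \<pi> (PiM {..<4::nat} (\<lambda>_. borel))"
  have Nprob: "prob_space N" unfolding N_def by (rule prob_space_PiM) (use Jprob in auto)
  interpret N: prob_space N by (rule Nprob)
  have \<pi>N: "\<pi> \<in> measurable N (PiM {..<4::nat} (\<lambda>_. borel))"
    unfolding \<pi>_def N_def by (rule measurable_restrict) simp
  have sfsN: "sigma_finite_subalgebra N F"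
    unfolding F_def by (rule sfs_vimage[OF Nprob \<pi>N])
  have spF: "space F = space N" unfolding F_def by simp
  have setsF: "sets F \<subseteq> sets N" unfolding F_def by (rule sets_image_in_sets[OF refl \<pi>N])
  have \<pi>F[measurable]: "\<pi> \<in> measurable F (PiM {..<4::nat} (\<lambda>_. borel))"
    unfolding F_def by (rule measurable_vimage_algebra1) (auto intro: measurable_space[OF \<pi>N])
  define f where "f \<omega> = min (snd (\<omega> 0) + snd (\<omega> 1)) (snd (\<omega> 2) + snd (\<omega> 3))" for \<omega> :: "nat \<Rightarrow> ennreal \<times> ennreal"
  define h where "h \<omega> = min (fst (\<omega> 0) + fst (\<omega> 1)) (fst (\<omega> 2) + fst (\<omega> 3))" for \<omega> :: "nat \<Rightarrow> ennreal \<times> ennreal"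
  define g where "g = nn_cond_exp N F f"
  have fN[measurable]: "f \<in> borel_measurable N" unfolding f_def N_def by measurable
  have hN[measurable]: "h \<in> borel_measurable N" unfolding h_def N_def by measurable
  have gF[measurable]: "g \<in> borel_measurable F" unfolding g_def by simp
  have gN[measurable]: "g \<in> borel_measurable N" unfolding g_def by simp
  define H where "H x = min (x 0 + x 1) (x 2 + x (3::nat))" for x :: "nat \<Rightarrow> ennreal"
  have H[measurable]: "H \<in> borel_measurable (PiM {..<4::nat} (\<lambda>_. borel))" unfolding H_def by measurable
  have hH: "h = (\<lambda>\<omega>. H (\<pi> \<omega>))" unfolding h_def H_def \<pi>_def by (simp add: fun_eq_iff)
  have hF[measurable]: "h \<in> borel_measurable F" unfolding hH by measurable
  define Bset where "Bset = {\<omega> \<in> space N. \<pi> \<omega> \<in> (\<Pi>\<^sub>E i\<in>{..<4::nat}. I) \<and> \<not> (g \<omega> + ennreal w < h \<omega>)}"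
  have BF: "Bset \<in> sets F"
  proof -
    have 1: "\<pi> -` (\<Pi>\<^sub>E i\<in>{..<4::nat}. I) \<inter> space F \<in> sets F"
      by (rule measurable_sets[OF \<pi>F]) (auto intro: sets_PiM_I_finite)
    have 2: "{\<omega> \<in> space F. \<not> (g \<omega> + ennreal w < h \<omega>)} \<in> sets F" by measurable
    have "Bset = (\<pi> -` (\<Pi>\<^sub>E i\<in>{..<4::nat}. I) \<inter> space F) \<inter> {\<omega> \<in> space F. \<not> (g \<omega> + ennreal w < h \<omega>)}"
      unfolding Bset_def spF by auto
    then show ?thesis using 1 2 by auto
  qed
  have BN[measurable]: "Bset \<in> sets N" using BF setsF by blast
  obtain C where C: "C \<in> sets (PiM {..<4::nat} (\<lambda>_. borel))" and BC: "Bset = \<pi> -` C \<inter> space N"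
    using BF unfolding F_def by (subst (asm) sets_vimage_algebra2) (auto intro: measurable_space[OF \<pi>N])
  define ch where "ch = (indicator Bset :: _ \<Rightarrow> ennreal)"
  have chN[measurable]: "ch \<in> borel_measurable N" unfolding ch_def by measurable
  have chF: "ch \<in> borel_measurable F" unfolding ch_def using BF by (rule borel_measurable_indicator)
  have spN_upd: "x(j := y) \<in> space N" if "x \<in> space N" "j < 4" for x j y
    using that unfolding N_def space_PiM by (auto simp: PiE_iff spJ extensional_def)
  have \<pi>_upd: "\<pi> (x(j := y)) = \<pi> (x(j := z))" if "fst y = fst z" for x j y z
    unfolding \<pi>_def using that by (auto simp: fun_eq_iff)
  have ch_upd: "ch (x(j := y)) = ch (x(j := z))" if "x \<in> space N" "j < 4" "fst y = fst z" for x j y z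
    unfolding ch_def BC indicator_def using spN_upd[OF that(1,2)] \<pi>_upd[OF that(3), of x j] by simp
  have inB: "fst (x j) \<in> I" if "x \<in> Bset" "j < 4" for x j
    using that unfolding Bset_def \<pi>_def by (auto simp: PiE_iff)
  have ch_supp: "ch x = 0" if "x \<in> space N" "fst (x j) \<notin> I" "j < 4" for x j
    using inB[of x j] that unfolding ch_def by (auto simp: indicator_def)
  define u where "u \<omega> = enn2real (snd (\<omega> 0)) + enn2real (fst (\<omega> 1)) - enn2real (fst (\<omega> 2)) - enn2real (fst (\<omega> (3::nat)))"
    for \<omega> :: "nat \<Rightarrow> ennreal \<times> ennreal"
  define cn where "cn \<omega> = (if u \<omega> < 0 then 1 else 0 :: ennreal)" for \<omega>
  define cp where "cp \<omega> = (if u \<omega> < 0 then 0 else 1 :: ennreal)" for \<omega>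
  define \<Phi>1 where "\<Phi>1 \<omega> = 2 * ch \<omega> * cn \<omega>" for \<omega>
  define \<Phi>2 where "\<Phi>2 \<omega> = 2 * ch \<omega> * cp \<omega>" for \<omega>
  have uN[measurable]: "u \<in> borel_measurable N" unfolding u_def N_def by measurable
  have \<Phi>1N[measurable]: "\<Phi>1 \<in> borel_measurable N" unfolding \<Phi>1_def cn_def by measurable
  have \<Phi>2N[measurable]: "\<Phi>2 \<in> borel_measurable N" unfolding \<Phi>2_def cp_def by measurable
  have swap: "(\<integral>\<^sup>+\<omega>. \<Phi> \<omega> * snd (\<omega> j) \<partial>N) = (\<integral>\<^sup>+\<omega>. \<Phi> \<omega> * fst (\<omega> j) \<partial>N)"
    if j: "j < 4" and \<Phi>m: "\<Phi> \<in> borel_measurable N"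
      and ind: "\<And>x y z. x \<in> space N \<Longrightarrow> fst y = fst z \<Longrightarrow> \<Phi> (x(j := y)) = \<Phi> (x(j := z))"
      and sup: "\<And>x. x \<in> space N \<Longrightarrow> fst (x j) \<notin> I \<Longrightarrow> \<Phi> x = 0" for j \<Phi>
  proof (rule antisym)
    have a: "j \<in> {..<4}" using j by simp
    have k1: "(\<integral>\<^sup>+ y. \<phi> (fst y) * snd y \<partial>J) \<le> (\<integral>\<^sup>+ y. \<phi> (fst y) * fst y \<partial>J)"
      if "\<phi> \<in> borel_measurable borel" for \<phi> :: "ennreal \<Rightarrow> ennreal" using keyJ1[OF that] by simp
    have k2: "(\<integral>\<^sup>+ y. \<phi> (fst y) * fst y \<partial>J) \<le> (\<integral>\<^sup>+ y. \<phi> (fst y) * snd y \<partial>J)"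
      if "\<phi> \<in> borel_measurable borel" for \<phi> :: "ennreal \<Rightarrow> ennreal" using keyJ1[OF that] by simp
    show "(\<integral>\<^sup>+\<omega>. \<Phi> \<omega> * snd (\<omega> j) \<partial>N) \<le> (\<integral>\<^sup>+\<omega>. \<Phi> \<omega> * fst (\<omega> j) \<partial>N)"
      by (rule coord_ge[OF Jprob setsJ, where K="{..<4}" and I=I, folded N_def, OF a finite_lessThan fstJ sndJ k1 \<Phi>m ind sup])
    show "(\<integral>\<^sup>+\<omega>. \<Phi> \<omega> * fst (\<omega> j) \<partial>N) \<le> (\<integral>\<^sup>+\<omega>. \<Phi> \<omega> * snd (\<omega> j) \<partial>N)"
      by (rule coord_ge[OF Jprob setsJ, where K="{..<4}" and I=I, folded N_def, OF a finite_lessThan sndJ fstJ k2 \<Phi>m ind sup])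
  qed
  have chu0: "ch (x(0 := y)) = ch (x(0 := z))" if "x \<in> space N" "fst y = fst z" for x y z
    using ch_upd[OF that(1) _ that(2)] by simp
  have chs0: "ch x = 0" if "x \<in> space N" "fst (x 0) \<notin> I" for x
    using ch_supp[OF that] by simp
  have Xlow: "(\<integral>\<^sup>+\<omega>. ch \<omega> * ennreal c0 \<partial>N) \<le> (\<integral>\<^sup>+\<omega>. ch \<omega> * G' (\<omega> 0) \<partial>N)"
    by (rule coord_ge[OF Jprob setsJ, where K="{..<4}" and I=I, folded N_def, OF _ finite_lessThan G'J _ keyJ2 chN chu0 chs0])
      simp_all
  have sw0: "(\<integral>\<^sup>+\<omega>. ch \<omega> * snd (\<omega> 0) \<partial>N) = (\<integral>\<^sup>+\<omega>. ch \<omega> * fst (\<omega> 0) \<partial>N)"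
    by (rule swap[OF _ chN chu0 chs0]) simp_all
  have sw1: "(\<integral>\<^sup>+\<omega>. \<Phi>1 \<omega> * snd (\<omega> 1) \<partial>N) = (\<integral>\<^sup>+\<omega>. \<Phi>1 \<omega> * fst (\<omega> 1) \<partial>N)"
  proof (rule swap[OF _ \<Phi>1N])
    show "\<Phi>1 (x(1 := y)) = \<Phi>1 (x(1 := z))" if "x \<in> space N" "fst y = fst z" for x y z
      using ch_upd[OF that(1) _ that(2), of 1] that(2) by (simp add: \<Phi>1_def cn_def u_def)
    show "\<Phi>1 x = 0" if "x \<in> space N" "fst (x 1) \<notin> I" for x
      using ch_supp[OF that] by (simp add: \<Phi>1_def)
  qed simp
  have sw2: "(\<integral>\<^sup>+\<omega>. \<Phi>2 \<omega> * snd (\<omega> 2) \<partial>N) = (\<integral>\<^sup>+\<omega>. \<Phi>2 \<omega> * fst (\<omega> 2) \<partial>N)"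
  proof (rule swap[OF _ \<Phi>2N])
    show "\<Phi>2 (x(2 := y)) = \<Phi>2 (x(2 := z))" if "x \<in> space N" "fst y = fst z" for x y z
      using ch_upd[OF that(1) _ that(2), of 2] that(2) by (simp add: \<Phi>2_def cp_def u_def)
    show "\<Phi>2 x = 0" if "x \<in> space N" "fst (x 2) \<notin> I" for x
      using ch_supp[OF that] by (simp add: \<Phi>2_def)
  qed simp
  have sw3: "(\<integral>\<^sup>+\<omega>. \<Phi>2 \<omega> * snd (\<omega> 3) \<partial>N) = (\<integral>\<^sup>+\<omega>. \<Phi>2 \<omega> * fst (\<omega> 3) \<partial>N)"
  proof (rule swap[OF _ \<Phi>2N])
    show "\<Phi>2 (x(3 := y)) = \<Phi>2 (x(3 := z))" if "x \<in> space N" "fst y = fst z" for x y z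
      using ch_upd[OF that(1) _ that(2), of 3] that(2) by (simp add: \<Phi>2_def cp_def u_def)
    show "\<Phi>2 x = 0" if "x \<in> space N" "fst (x 3) \<notin> I" for x
      using ch_supp[OF that] by (simp add: \<Phi>2_def)
  qed simp
  have AEfin: "AE \<omega> in N. \<forall>j\<in>{..<4::nat}. fst (\<omega> j) \<in> I \<longrightarrow> snd (\<omega> j) < \<infinity>"
  proof (rule eventually_ball_finite)
    show "\<forall>j\<in>{..<4::nat}. AE \<omega> in N. fst (\<omega> j) \<in> I \<longrightarrow> snd (\<omega> j) < \<infinity>"
    proof
      fix j :: nat assume j: "j \<in> {..<4}"
      show "AE \<omega> in N. fst (\<omega> j) \<in> I \<longrightarrow> snd (\<omega> j) < \<infinity>"
        unfolding N_def
        using AE_PiM_component[of "{..<4}" "\<lambda>_. J" j "\<lambda>y. fst y \<in> I \<longrightarrow> snd y < \<infinity>"] Jprob AEJ j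
        by simp
    qed
  qed simp
  define \<mu> where "\<mu> = emeasure N Bset"
  have mufin: "\<mu> < \<infinity>" unfolding \<mu>_def using N.emeasure_le_1[of Bset]
    by (metis ennreal_one_less_top infinity_ennreal_def le_less_trans)
  have chc: "(\<integral>\<^sup>+\<omega>. ch \<omega> * c \<partial>N) = c * \<mu>" for c :: ennreal
  proof -
    have "(\<integral>\<^sup>+\<omega>. ch \<omega> * c \<partial>N) = (\<integral>\<^sup>+\<omega>. c * indicator Bset \<omega> \<partial>N)"
      unfolding ch_def by (simp add: mult.commute)
    then show ?thesis unfolding \<mu>_def using nn_integral_cmult_indicator[OF BN] by simp
  qed
  have gint: "(\<integral>\<^sup>+\<omega>. ch \<omega> * g \<omega> \<partial>N) = (\<integral>\<^sup>+\<omega>. ch \<omega> * f \<omega> \<partial>N)"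
    unfolding g_def by (rule sigma_finite_subalgebra.nn_cond_exp_intg[OF sfsN chF fN])
  have bI: "t \<le> ennreal b" if "t \<in> I" for t using Isub that by auto
  have Hh_le: "(\<integral>\<^sup>+\<omega>. ch \<omega> * h \<omega> \<partial>N) \<le> (\<integral>\<^sup>+\<omega>. ch \<omega> * f \<omega> \<partial>N) + ennreal w * \<mu>"
  proof -
    have "(\<integral>\<^sup>+\<omega>. ch \<omega> * h \<omega> \<partial>N) \<le> (\<integral>\<^sup>+\<omega>. ch \<omega> * g \<omega> + ch \<omega> * ennreal w \<partial>N)"
    proof (rule nn_integral_mono)
      fix \<omega> assume "\<omega> \<in> space N"
      show "ch \<omega> * h \<omega> \<le> ch \<omega> * g \<omega> + ch \<omega> * ennreal w"
      proof (cases "\<omega> \<in> Bset")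
        case True
        then have "h \<omega> \<le> g \<omega> + ennreal w" unfolding Bset_def by (simp add: not_less)
        then show ?thesis using True unfolding ch_def by simp
      qed (simp add: ch_def)
    qed
    also have "\<dots> = (\<integral>\<^sup>+\<omega>. ch \<omega> * g \<omega> \<partial>N) + (\<integral>\<^sup>+\<omega>. ch \<omega> * ennreal w \<partial>N)"
      by (rule nn_integral_add) simp_all
    finally show ?thesis unfolding gint chc .
  qed
  have Hh_fin: "(\<integral>\<^sup>+\<omega>. ch \<omega> * h \<omega> \<partial>N) \<le> ennreal (2*b) * \<mu>"
  proof -
    have "(\<integral>\<^sup>+\<omega>. ch \<omega> * h \<omega> \<partial>N) \<le> (\<integral>\<^sup>+\<omega>. ch \<omega> * ennreal (2*b) \<partial>N)"
    proof (rule nn_integral_mono)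
      fix \<omega> assume "\<omega> \<in> space N"
      show "ch \<omega> * h \<omega> \<le> ch \<omega> * ennreal (2*b)"
      proof (cases "\<omega> \<in> Bset")
        case True
        have "h \<omega> \<le> fst (\<omega> 0) + fst (\<omega> 1)" unfolding h_def by simp
        also have "\<dots> \<le> ennreal b + ennreal b" using bI inB[OF True] by (intro add_mono) auto
        also have "\<dots> = ennreal (2*b)" using wpos unfolding b_def by (simp add: ennreal_plus[symmetric] del: ennreal_plus)
        finally show ?thesis using True unfolding ch_def by simp
      qed (simp add: ch_def)
    qed
    then show ?thesis unfolding chc .
  qed
  have Tfin: "(\<integral>\<^sup>+\<omega>. \<Phi> \<omega> * fst (\<omega> j) \<partial>N) \<le> ennreal (2*b) * \<mu>"
    if "j < 4" "\<And>\<omega>. \<Phi> \<omega> \<le> 2 * ch \<omega>" for \<Phi> j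
  proof -
    have "(\<integral>\<^sup>+\<omega>. \<Phi> \<omega> * fst (\<omega> j) \<partial>N) \<le> (\<integral>\<^sup>+\<omega>. ch \<omega> * ennreal (2*b) \<partial>N)"
    proof (rule nn_integral_mono)
      fix \<omega> assume "\<omega> \<in> space N"
      show "\<Phi> \<omega> * fst (\<omega> j) \<le> ch \<omega> * ennreal (2*b)"
      proof (cases "\<omega> \<in> Bset")
        case True
        have "\<Phi> \<omega> * fst (\<omega> j) \<le> 2 * ennreal b"
          using that(2)[of \<omega>] bI[OF inB[OF True that(1)]] True unfolding ch_def
          by (intro mult_mono) auto
        also have "\<dots> = ennreal (2*b)" using wpos unfolding b_def by (simp add: ennreal_mult)
        finally show ?thesis using True unfolding ch_def by simp
      next
        case False
        then have "\<Phi> \<omega> = 0" using that(2)[of \<omega>] unfolding ch_def by simp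
        then show ?thesis by simp
      qed
    qed
    then show ?thesis unfolding chc .
  qed
  define L where "L \<omega> = 2 * (ch \<omega> * f \<omega>) + ch \<omega> * G' (\<omega> 0) + ch \<omega> * fst (\<omega> 0)
      + \<Phi>1 \<omega> * fst (\<omega> 1) + \<Phi>2 \<omega> * fst (\<omega> 2) + \<Phi>2 \<omega> * fst (\<omega> 3)" for \<omega>
  define R where "R \<omega> = 2 * (ch \<omega> * h \<omega>) + ch \<omega> * ennreal (4*w) + ch \<omega> * snd (\<omega> 0)
      + \<Phi>1 \<omega> * snd (\<omega> 1) + \<Phi>2 \<omega> * snd (\<omega> 2) + \<Phi>2 \<omega> * snd (\<omega> 3)" for \<omega>
  have pw: "AE \<omega> in N. L \<omega> \<le> R \<omega>"
    using AEfin
  proof eventually_elim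
    case (elim \<omega>)
    show ?case
    proof (cases "\<omega> \<in> Bset")
      case False
      then show ?thesis by (simp add: L_def R_def ch_def \<Phi>1_def \<Phi>2_def)
    next
      case True
      have chone: "ch \<omega> = 1" using True by (simp add: ch_def)
      have fI: "fst (\<omega> j) \<in> I" if "j < 4" for j using inB[OF True that] .
      have sf: "snd (\<omega> j) < \<infinity>" if "j < 4" for j using elim fI[OF that] that by auto
      obtain a0 where a0: "fst (\<omega> 0) = ennreal a0" "real k * w < a0" "a0 \<le> (real k + 1) * w"
        using Ival[OF fI[of 0]] by auto
      obtain a1 where a1: "fst (\<omega> 1) = ennreal a1" "real k * w < a1" "a1 \<le> (real k + 1) * w"
        using Ival[OF fI[of 1]] by auto
      obtain a2 where a2: "fst (\<omega> 2) = ennreal a2" "real k * w < a2" "a2 \<le> (real k + 1) * w"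
        using Ival[OF fI[of 2]] by auto
      obtain a3 where a3: "fst (\<omega> 3) = ennreal a3" "real k * w < a3" "a3 \<le> (real k + 1) * w"
        using Ival[OF fI[of 3]] by auto
      obtain b0 where b0: "0 \<le> b0" "snd (\<omega> 0) = ennreal b0" using fin_ennreal[OF sf[of 0]] by auto
      obtain b1 where b1: "0 \<le> b1" "snd (\<omega> 1) = ennreal b1" using fin_ennreal[OF sf[of 1]] by auto
      obtain b2 where b2: "0 \<le> b2" "snd (\<omega> 2) = ennreal b2" using fin_ennreal[OF sf[of 2]] by auto
      obtain b3 where b3: "0 \<le> b3" "snd (\<omega> 3) = ennreal b3" using fin_ennreal[OF sf[of 3]] by auto
      have kw: "0 \<le> real k * w" using wpos by simp
      have nn: "0 \<le> a0" "0 \<le> a1" "0 \<le> a2" "0 \<le> a3" using a0 a1 a2 a3 kw by linarith+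
      have uval: "u \<omega> = b0 + a1 - a2 - a3" unfolding u_def using a0 a1 a2 a3 b0 b1 b2 b3 nn by simp
      have P: "2 * min (ennreal b0 + ennreal b1) (ennreal b2 + ennreal b3) + ennreal \<bar>b0 - a0\<bar> + ennreal a0
      + 2 * (if b0 + a1 - a2 - a3 < 0 then 1 else 0) * ennreal a1 + 2 * (if b0 + a1 - a2 - a3 < 0 then 0 else 1) * ennreal a2
      + 2 * (if b0 + a1 - a2 - a3 < 0 then 0 else 1) * ennreal a3
    \<le> 2 * min (ennreal a0 + ennreal a1) (ennreal a2 + ennreal a3) + ennreal (4 * w) + ennreal b0
      + 2 * (if b0 + a1 - a2 - a3 < 0 then 1 else 0) * ennreal b1 + 2 * (if b0 + a1 - a2 - a3 < 0 then 0 else 1) * ennreal b2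
      + 2 * (if b0 + a1 - a2 - a3 < 0 then 0 else 1) * ennreal b3"
        by (rule pointwise_enn[where K="real k" and w=w]) (use a0 a1 a2 a3 b0 b1 b2 b3 wpos in auto)
      have eL: "L \<omega> = 2 * min (ennreal b0 + ennreal b1) (ennreal b2 + ennreal b3) + ennreal \<bar>b0 - a0\<bar> + ennreal a0
      + 2 * (if b0 + a1 - a2 - a3 < 0 then 1 else 0) * ennreal a1 + 2 * (if b0 + a1 - a2 - a3 < 0 then 0 else 1) * ennreal a2
      + 2 * (if b0 + a1 - a2 - a3 < 0 then 0 else 1) * ennreal a3"
        unfolding L_def f_def G'_def \<Phi>1_def \<Phi>2_def cn_def cp_def chone uval
        using a0 a1 a2 a3 b0 b1 b2 b3 nn by (simp add: mult.assoc)
      have eR: "R \<omega> = 2 * min (ennreal a0 + ennreal a1) (ennreal a2 + ennreal a3) + ennreal (4 * w) + ennreal b0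
      + 2 * (if b0 + a1 - a2 - a3 < 0 then 1 else 0) * ennreal b1 + 2 * (if b0 + a1 - a2 - a3 < 0 then 0 else 1) * ennreal b2
      + 2 * (if b0 + a1 - a2 - a3 < 0 then 0 else 1) * ennreal b3"
        unfolding R_def h_def \<Phi>1_def \<Phi>2_def cn_def cp_def chone uval
        using a0 a1 a2 a3 b0 b1 b2 b3 nn by (simp add: mult.assoc)
      show ?thesis using P unfolding eL eR .
    qed
  qed
  have mf0[measurable]: "(\<lambda>\<omega>. fst (\<omega> 0)) \<in> borel_measurable N" unfolding N_def by measurable
  have mf1[measurable]: "(\<lambda>\<omega>. fst (\<omega> 1)) \<in> borel_measurable N" unfolding N_def by measurable
  have mf2[measurable]: "(\<lambda>\<omega>. fst (\<omega> 2)) \<in> borel_measurable N" unfolding N_def by measurable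
  have mf3[measurable]: "(\<lambda>\<omega>. fst (\<omega> 3)) \<in> borel_measurable N" unfolding N_def by measurable
  have ms0[measurable]: "(\<lambda>\<omega>. snd (\<omega> 0)) \<in> borel_measurable N" unfolding N_def by measurable
  have ms1[measurable]: "(\<lambda>\<omega>. snd (\<omega> 1)) \<in> borel_measurable N" unfolding N_def by measurable
  have ms2[measurable]: "(\<lambda>\<omega>. snd (\<omega> 2)) \<in> borel_measurable N" unfolding N_def by measurable
  have ms3[measurable]: "(\<lambda>\<omega>. snd (\<omega> 3)) \<in> borel_measurable N" unfolding N_def by measurable
  have mG[measurable]: "(\<lambda>\<omega>. G' (\<omega> 0)) \<in> borel_measurable N" unfolding N_def by measurable
  have intLR: "integral\<^sup>N N L \<le> integral\<^sup>N N R" by (rule nn_integral_mono_AE[OF pw])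
  define A where "A = (\<integral>\<^sup>+\<omega>. ch \<omega> * f \<omega> \<partial>N)"
  define Xg where "Xg = (\<integral>\<^sup>+\<omega>. ch \<omega> * G' (\<omega> 0) \<partial>N)"
  define Hh where "Hh = (\<integral>\<^sup>+\<omega>. ch \<omega> * h \<omega> \<partial>N)"
  define T0 where "T0 = (\<integral>\<^sup>+\<omega>. ch \<omega> * fst (\<omega> 0) \<partial>N)"
  define T1 where "T1 = (\<integral>\<^sup>+\<omega>. \<Phi>1 \<omega> * fst (\<omega> 1) \<partial>N)"
  define T2 where "T2 = (\<integral>\<^sup>+\<omega>. \<Phi>2 \<omega> * fst (\<omega> 2) \<partial>N)"
  define T3 where "T3 = (\<integral>\<^sup>+\<omega>. \<Phi>2 \<omega> * fst (\<omega> 3) \<partial>N)"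
  have eqL: "integral\<^sup>N N L = 2 * A + Xg + (T0 + T1 + T2 + T3)"
  proof -
    have "integral\<^sup>N N L = (\<integral>\<^sup>+\<omega>. 2 * (ch \<omega> * f \<omega>) \<partial>N) + Xg + T0 + T1 + T2 + T3"
      unfolding L_def Xg_def T0_def T1_def T2_def T3_def by (rule nn6) measurable
    also have "(\<integral>\<^sup>+\<omega>. 2 * (ch \<omega> * f \<omega>) \<partial>N) = 2 * A"
      unfolding A_def by (rule nn_integral_cmult) measurable
    finally show ?thesis by (simp add: add.assoc)
  qed
  have eqR: "integral\<^sup>N N R = 2 * Hh + ennreal (4*w) * \<mu> + (T0 + T1 + T2 + T3)"
  proof -
    have "integral\<^sup>N N R = (\<integral>\<^sup>+\<omega>. 2 * (ch \<omega> * h \<omega>) \<partial>N) + (\<integral>\<^sup>+\<omega>. ch \<omega> * ennreal (4*w) \<partial>N)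
        + (\<integral>\<^sup>+\<omega>. ch \<omega> * snd (\<omega> 0) \<partial>N) + (\<integral>\<^sup>+\<omega>. \<Phi>1 \<omega> * snd (\<omega> 1) \<partial>N)
        + (\<integral>\<^sup>+\<omega>. \<Phi>2 \<omega> * snd (\<omega> 2) \<partial>N) + (\<integral>\<^sup>+\<omega>. \<Phi>2 \<omega> * snd (\<omega> 3) \<partial>N)"
      unfolding R_def by (rule nn6) measurable
    also have "(\<integral>\<^sup>+\<omega>. 2 * (ch \<omega> * h \<omega>) \<partial>N) = 2 * Hh"
      unfolding Hh_def by (rule nn_integral_cmult) measurable
    finally show ?thesis unfolding chc sw0 sw1 sw2 sw3 T0_def T1_def T2_def T3_def by (simp add: add.assoc)
  qed
  have Xge: "ennreal c0 * \<mu> \<le> Xg" using Xlow unfolding chc Xg_def .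
  have Tf: "T0 + T1 + T2 + T3 < \<infinity>"
  proof -
    have bm: "ennreal (2*b) * \<mu> < \<infinity>" using mufin by (simp add: ennreal_mult_less_top infinity_ennreal_def)
    have "T0 \<le> ennreal (2*b) * \<mu>" unfolding T0_def by (rule Tfin) (auto simp: ch_def indicator_def)
    moreover have "T1 \<le> ennreal (2*b) * \<mu>" unfolding T1_def by (rule Tfin) (auto simp: \<Phi>1_def cn_def)
    moreover have "T2 \<le> ennreal (2*b) * \<mu>" unfolding T2_def by (rule Tfin) (auto simp: \<Phi>2_def cp_def)
    moreover have "T3 \<le> ennreal (2*b) * \<mu>" unfolding T3_def by (rule Tfin) (auto simp: \<Phi>2_def cp_def)
    ultimately show ?thesis using bm
      by (metis (no_types, lifting) ennreal_add_less_top infinity_ennreal_def le_less_trans)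
  qed
  have main: "2 * A + Xg + (T0 + T1 + T2 + T3) \<le> 2 * Hh + ennreal (4*w) * \<mu> + (T0 + T1 + T2 + T3)"
    using intLR unfolding eqL eqR .
  have c08: "c0 = 8 * w" unfolding w_def by simp
  have "\<mu> = 0"
    by (rule final_alg[OF main Xge Hh_le[folded A_def Hh_def] Hh_fin[folded Hh_def] Tf mufin c08 wpos])
  then have mu0: "emeasure N Bset = 0" unfolding \<mu>_def .
  have AEmain: "AE \<omega> in N. (\<forall>i<4. fst (\<omega> i) \<in> I) \<longrightarrow> g \<omega> + ennreal w < h \<omega>"
  proof (rule AE_I'[of Bset])
    show "Bset \<in> null_sets N" using mu0 BN by auto
    show "{\<omega> \<in> space N. \<not> ((\<forall>i<4. fst (\<omega> i) \<in> I) \<longrightarrow> g \<omega> + ennreal w < h \<omega>)} \<subseteq> Bset"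
      unfolding Bset_def \<pi>_def by (auto simp: PiE_iff)
  qed
  show ?thesis
    apply (rule exI[of _ I], rule exI[of _ w], rule exI[of _ b])
    using Ib Isub wpos Ipos AEmain unfolding Let_def g_def f_def h_def F_def \<pi>_def N_def J_def by simp
qed

end
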